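(* Let $X_1,X_2,\ldots$ be i.i.d. with mean $0$ and variance $1$, and let $G_n\in\mathscr G_n$ with $|E(G_n)|\to\infty$. Then for every $\varepsilon>0$, $$\lim_{M\to\infty}\sup_{n\ge1}\Pr\big(|S_{G_n}(\bm X_n)-S_{G_n}(\bm X_{n,M})|>\varepsilon\big)=0.$$
   Context: $\mathscr G_n$: simple undirected graphs on $\{1,\ldots,n\}$ labeled so that degrees satisfy $d_1\ge\cdots\ge d_n$; $A(G_n)=((a_{u,v}))$ adjacency matrix, $E(G_n)$ edge set. $S_{G_n}(\bm x):=\frac{1}{\sqrt{|E(G_n)|}}\sum_{1\le u<v\le n}a_{u,v}x_ux_v$, $\bm X_n=(X_1,\ldots,X_n)^\top$. Truncation: $a_M=\mathbb E[X_1\mathbf 1\{|X_1|\le M\}]$, $b_M=\operatorname{Var}[X_1\mathbf 1\{|X_1|\le M\}]$, and for $M$ large so that $b_M>0$, $X_{u,M}:=b_M^{-1/2}(X_u\mathbf 1\{|X_u|\le M\}-a_M)$, $\bm X_{n,M}=(X_{1,M},\ldots,X_{n,M})^\top$. *)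

theory Defs
  imports "HOL-Probability.Probability"
begin

definition simple_graph_on :: "nat \<Rightarrow> (nat \<Rightarrow> nat \<Rightarrow> bool) \<Rightarrow> bool" where
  "simple_graph_on n A \<longleftrightarrow>
     (\<forall>u v. A u v \<longrightarrow> u \<in> {1..n} \<and> v \<in> {1..n}) \<and>
     (\<forall>u v. A u v \<longleftrightarrow> A v u) \<and> (\<forall>u. \<not> A u u)"

definition degree :: "nat \<Rightarrow> (nat \<Rightarrow> nat \<Rightarrow> bool) \<Rightarrow> nat \<Rightarrow> nat" where
  "degree n A u = card {v \<in> {1..n}. A u v}"

definition graph_class :: "nat \<Rightarrow> (nat \<Rightarrow> nat \<Rightarrow> bool) \<Rightarrow> bool" where
  "graph_class n A \<longleftrightarrow> simple_graph_on n A \<and>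
     (\<forall>u v. 1 \<le> u \<and> u \<le> v \<and> v \<le> n \<longrightarrow> degree n A v \<le> degree n A u)"

definition num_edges :: "nat \<Rightarrow> (nat \<Rightarrow> nat \<Rightarrow> bool) \<Rightarrow> nat" where
  "num_edges n A = card {(u, v). 1 \<le> u \<and> u < v \<and> v \<le> n \<and> A u v}"

definition S_graph :: "nat \<Rightarrow> (nat \<Rightarrow> nat \<Rightarrow> bool) \<Rightarrow> (nat \<Rightarrow> real) \<Rightarrow> real" where
  "S_graph n A x = (1 / sqrt (real (num_edges n A))) *
     (\<Sum>u\<in>{1..n}. \<Sum>v\<in>{u<..n}. (if A u v then 1 else 0) * x u * x v)"

definition trunc_mean :: "'a measure \<Rightarrow> (nat \<Rightarrow> 'a \<Rightarrow> real) \<Rightarrow> real \<Rightarrow> real" where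
  "trunc_mean M X K = prob_space.expectation M (\<lambda>\<omega>. X 1 \<omega> * indicator {\<omega>. \<bar>X 1 \<omega>\<bar> \<le> K} \<omega>)"

definition trunc_var :: "'a measure \<Rightarrow> (nat \<Rightarrow> 'a \<Rightarrow> real) \<Rightarrow> real \<Rightarrow> real" where
  "trunc_var M X K = prob_space.variance M (\<lambda>\<omega>. X 1 \<omega> * indicator {\<omega>. \<bar>X 1 \<omega>\<bar> \<le> K} \<omega>)"

definition trunc_X :: "'a measure \<Rightarrow> (nat \<Rightarrow> 'a \<Rightarrow> real) \<Rightarrow> real \<Rightarrow> nat \<Rightarrow> 'a \<Rightarrow> real" where
  "trunc_X M X K u \<omega> =
     (X u \<omega> * indicator {\<omega>. \<bar>X u \<omega>\<bar> \<le> K} \<omega> - trunc_mean M X K) / sqrt (trunc_var M X K)"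

end

theory Submission imports Defs begin

lemma edge_set_finite: "finite {(u, v). 1 \<le> u \<and> u < v \<and> v \<le> (n::nat) \<and> A u v}"
  by (rule finite_subset[of _ "{1..n} \<times> {1..n}"]) auto

lemma graph_sum:
  "(\<Sum>u\<in>{1..(n::nat)}. \<Sum>v\<in>{u<..n}. (if A u v then 1 else 0) * x u * x v) =
   (\<Sum>p\<in>{(u, v). 1 \<le> u \<and> u < v \<and> v \<le> n \<and> A u v}. (x (fst p) * x (snd p) :: real))"
proof -
  have "(\<Sum>u\<in>{1..n}. \<Sum>v\<in>{u<..n}. (if A u v then 1 else 0) * x u * x v) =
    (\<Sum>p\<in>(SIGMA u:{1..n}. {u<..n}). (if A (fst p) (snd p) then x (fst p) * x (snd p) else 0))"
    by (subst sum.Sigma) (auto simp: split_def intro!: sum.cong)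
  also have "\<dots> = (\<Sum>p\<in>{p\<in>(SIGMA u:{1..n}. {u<..n}). A (fst p) (snd p)}. x (fst p) * x (snd p))"
    by (subst sum.inter_filter) auto
  also have "{p\<in>(SIGMA u:{1..n}. {u<..n}). A (fst p) (snd p)} = {(u, v). 1 \<le> u \<and> u < v \<and> v \<le> n \<and> A u v}"
    by auto
  finally show ?thesis .
qed


locale iidX = prob_space M for M :: "'a measure" +
  fixes X :: "nat \<Rightarrow> 'a \<Rightarrow> real"
  assumes measX[measurable]: "\<And>i. X i \<in> borel_measurable M"
  and indepX: "indep_vars (\<lambda>_. borel) X UNIV"
  and identX: "\<And>i. distr M borel (X i) = distr M borel (X 1)"
begin

lemma ident_integrable:
  fixes \<phi> :: "real \<Rightarrow> real"
  assumes [measurable]: "\<phi> \<in> borel_measurable borel" and "integrable M (\<lambda>\<omega>. \<phi> (X 1 \<omega>))"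
  shows "integrable M (\<lambda>\<omega>. \<phi> (X i \<omega>))"
proof -
  have "integrable (distr M borel (X 1)) \<phi>"
    using integrable_distr_eq[of "X 1" M borel \<phi>] assms by simp
  then have "integrable (distr M borel (X i)) \<phi>" by (simp add: identX[of i])
  then show ?thesis using integrable_distr_eq[of "X i" M borel \<phi>] by simp
qed

lemma ident_integral:
  fixes \<phi> :: "real \<Rightarrow> real"
  assumes [measurable]: "\<phi> \<in> borel_measurable borel"
  shows "(\<integral>\<omega>. \<phi> (X i \<omega>) \<partial>M) = (\<integral>\<omega>. \<phi> (X 1 \<omega>) \<partial>M)"
proof -
  have "(\<integral>\<omega>. \<phi> (X i \<omega>) \<partial>M) = integral\<^sup>L (distr M borel (X i)) \<phi>"
    using integral_distr[of "X i" M borel \<phi>] by simp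
  also have "\<dots> = integral\<^sup>L (distr M borel (X 1)) \<phi>" by (simp add: identX[of i])
  also have "\<dots> = (\<integral>\<omega>. \<phi> (X 1 \<omega>) \<partial>M)" using integral_distr[of "X 1" M borel \<phi>] by simp
  finally show ?thesis .
qed

lemma prod_expect:
  fixes \<psi> :: "nat \<Rightarrow> real \<Rightarrow> real"
  assumes D: "finite D" and meas: "\<And>i. i \<in> D \<Longrightarrow> \<psi> i \<in> borel_measurable borel"
    and int: "\<And>i. i \<in> D \<Longrightarrow> integrable M (\<lambda>\<omega>. \<psi> i (X 1 \<omega>))"
  shows "integrable M (\<lambda>\<omega>. \<Prod>i\<in>D. \<psi> i (X i \<omega>))"
    and "(\<integral>\<omega>. (\<Prod>i\<in>D. \<psi> i (X i \<omega>)) \<partial>M) = (\<Prod>i\<in>D. \<integral>\<omega>. \<psi> i (X 1 \<omega>) \<partial>M)"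
proof -
  have ind: "indep_vars (\<lambda>_. borel) (\<lambda>i \<omega>. \<psi> i (X i \<omega>)) D"
    by (rule indep_vars_compose2[OF indep_vars_subset[OF indepX]]) (auto simp: meas)
  have int': "\<And>i. i \<in> D \<Longrightarrow> integrable M (\<lambda>\<omega>. \<psi> i (X i \<omega>))"
    using ident_integrable meas int by blast
  show "integrable M (\<lambda>\<omega>. \<Prod>i\<in>D. \<psi> i (X i \<omega>))"
    by (rule indep_vars_integrable[OF D ind int'])
  have "(\<integral>\<omega>. (\<Prod>i\<in>D. \<psi> i (X i \<omega>)) \<partial>M) = (\<Prod>i\<in>D. \<integral>\<omega>. \<psi> i (X i \<omega>) \<partial>M)"
    by (rule indep_vars_lebesgue_integral[OF D ind int'])
  also have "\<dots> = (\<Prod>i\<in>D. \<integral>\<omega>. \<psi> i (X 1 \<omega>) \<partial>M)"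
    by (intro prod.cong refl ident_integral meas)
  finally show "(\<integral>\<omega>. (\<Prod>i\<in>D. \<psi> i (X i \<omega>)) \<partial>M) = (\<Prod>i\<in>D. \<integral>\<omega>. \<psi> i (X 1 \<omega>) \<partial>M)" .
qed

lemma sq_bound: "(1 + a + b)^2 \<le> 3 * (1 + a^2 + (b::real)^2)"
proof -
  have "0 \<le> (a-1)^2+(b-1)^2+(a-b)^2" by simp
  then show ?thesis by (simp add: power2_eq_square algebra_simps)
qed

lemma pair_expect:
  fixes f g :: "real \<Rightarrow> real"
  assumes [measurable]: "f \<in> borel_measurable borel" "g \<in> borel_measurable borel"
   and f2: "integrable M (\<lambda>\<omega>. (f (X 1 \<omega>))^2)" and g2: "integrable M (\<lambda>\<omega>. (g (X 1 \<omega>))^2)"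
   and f1: "integrable M (\<lambda>\<omega>. f (X 1 \<omega>))" and g1: "integrable M (\<lambda>\<omega>. g (X 1 \<omega>))"
   and f0: "(\<integral>\<omega>. f (X 1 \<omega>) \<partial>M) = 0" and g0: "(\<integral>\<omega>. g (X 1 \<omega>) \<partial>M) = 0"
   and uv: "u < v" "u' < v'"
  shows "integrable M (\<lambda>\<omega>. f (X u \<omega>) * g (X v \<omega>) * (f (X u' \<omega>) * g (X v' \<omega>)))"
   and "(\<integral>\<omega>. f (X u \<omega>) * g (X v \<omega>) * (f (X u' \<omega>) * g (X v' \<omega>)) \<partial>M) =
        (if (u,v) = (u',v') then (\<integral>\<omega>. (f (X 1 \<omega>))^2 \<partial>M) * (\<integral>\<omega>. (g (X 1 \<omega>))^2 \<partial>M) else 0)"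
proof -
  define \<psi> where "\<psi> i x = (if i=u then f x else 1)*(if i=v then g x else 1)*((if i=u' then f x else 1)*(if i=v' then g x else 1))" for i x
  define D where "D = {u,v,u',v'}"
  have finD: "finite D" by (simp add: D_def)
  have eq: "f (X u \<omega>) * g (X v \<omega>) * (f (X u' \<omega>) * g (X v' \<omega>)) = (\<Prod>i\<in>D. \<psi> i (X i \<omega>))" for \<omega>
    unfolding \<psi>_def prod.distrib using finD by (simp add: D_def)
  have mif: "(\<lambda>x::real. if c then h x else 1::real) \<in> borel_measurable borel"
    if "h \<in> borel_measurable borel" for c h using that by (cases c) auto
  have m\<psi>[measurable]: "\<psi> i \<in> borel_measurable borel" for i
    unfolding \<psi>_def[abs_def] by (intro borel_measurable_times mif) auto
  have b1: "\<bar>(if i=a then f x else 1)*(if i=b then g x else 1)\<bar> \<le> 1 + \<bar>f x\<bar> + \<bar>g x\<bar>"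
    if "a \<noteq> b" for a b i x using that by auto
  have b2: "\<bar>\<psi> i x\<bar> \<le> 3 * (1 + (f x)^2 + (g x)^2)" for i x
  proof -
    have "\<bar>\<psi> i x\<bar> \<le> (1 + \<bar>f x\<bar> + \<bar>g x\<bar>) * (1 + \<bar>f x\<bar> + \<bar>g x\<bar>)"
      unfolding \<psi>_def abs_mult by (intro mult_mono b1[unfolded abs_mult]) (use uv in auto)
    also have "\<dots> \<le> 3 * (1 + \<bar>f x\<bar>^2 + \<bar>g x\<bar>^2)" using sq_bound[of "\<bar>f x\<bar>" "\<bar>g x\<bar>"]
      by (simp add: power2_eq_square)
    finally show ?thesis by simp
  qed
  have intw: "integrable M (\<lambda>\<omega>. 3 * (1 + (f (X 1 \<omega>))^2 + (g (X 1 \<omega>))^2))"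
    using f2 g2 by (intro integrable_mult_right integrable_add) auto
  have int\<psi>: "integrable M (\<lambda>\<omega>. \<psi> i (X 1 \<omega>))" for i
    by (rule Bochner_Integration.integrable_bound[OF intw]) (auto intro!: AE_I2 order.trans[OF b2])
  note pe = prod_expect[OF finD _ int\<psi>]
  show "integrable M (\<lambda>\<omega>. f (X u \<omega>) * g (X v \<omega>) * (f (X u' \<omega>) * g (X v' \<omega>)))"
    unfolding eq using pe(1) by simp
  have "(\<integral>\<omega>. f (X u \<omega>) * g (X v \<omega>) * (f (X u' \<omega>) * g (X v' \<omega>)) \<partial>M) = (\<Prod>i\<in>D. \<integral>\<omega>. \<psi> i (X 1 \<omega>) \<partial>M)"
    unfolding eq using pe(2) by simp
  also have "\<dots> = (if (u,v) = (u',v') then (\<integral>\<omega>. (f (X 1 \<omega>))^2 \<partial>M) * (\<integral>\<omega>. (g (X 1 \<omega>))^2 \<partial>M) else 0)"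
  proof (cases "(u,v) = (u',v')")
    case True
    then have "D = {u,v}" by (auto simp: D_def)
    moreover have "\<psi> u = (\<lambda>x. (f x)^2)" "\<psi> v = (\<lambda>x. (g x)^2)"
      using True uv by (auto simp: \<psi>_def fun_eq_iff power2_eq_square)
    ultimately show ?thesis using True uv by simp
  next
    case False
    have "\<exists>i\<in>D. (\<integral>\<omega>. \<psi> i (X 1 \<omega>) \<partial>M) = 0"
    proof (cases "u \<in> {u',v'}")
      case False
      then have "\<psi> u = f" using uv by (auto simp: \<psi>_def fun_eq_iff)
      then show ?thesis using f0 by (auto simp: D_def)
    next
      case True
      then have "v \<notin> {u,u',v'}" using uv \<open>(u,v) \<noteq> (u',v')\<close> by auto
      then have "\<psi> v = g" using uv by (auto simp: \<psi>_def fun_eq_iff)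
      then show ?thesis using g0 by (auto simp: D_def)
    qed
    then have "(\<Prod>i\<in>D. \<integral>\<omega>. \<psi> i (X 1 \<omega>) \<partial>M) = 0" using finD by (simp add: prod_zero_iff)
    then show ?thesis using False by auto
  qed
  finally show "(\<integral>\<omega>. f (X u \<omega>) * g (X v \<omega>) * (f (X u' \<omega>) * g (X v' \<omega>)) \<partial>M) =
        (if (u,v) = (u',v') then (\<integral>\<omega>. (f (X 1 \<omega>))^2 \<partial>M) * (\<integral>\<omega>. (g (X 1 \<omega>))^2 \<partial>M) else 0)" .
qed

lemma sum_sq:
  fixes f g :: "real \<Rightarrow> real"
  assumes [measurable]: "f \<in> borel_measurable borel" "g \<in> borel_measurable borel"
   and f2: "integrable M (\<lambda>\<omega>. (f (X 1 \<omega>))^2)" and g2: "integrable M (\<lambda>\<omega>. (g (X 1 \<omega>))^2)"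
   and f1: "integrable M (\<lambda>\<omega>. f (X 1 \<omega>))" and g1: "integrable M (\<lambda>\<omega>. g (X 1 \<omega>))"
   and f0: "(\<integral>\<omega>. f (X 1 \<omega>) \<partial>M) = 0" and g0: "(\<integral>\<omega>. g (X 1 \<omega>) \<partial>M) = 0"
   and P: "finite P" "\<And>p. p \<in> P \<Longrightarrow> fst p < snd p"
  shows "integrable M (\<lambda>\<omega>. (\<Sum>p\<in>P. f (X (fst p) \<omega>) * g (X (snd p) \<omega>))^2)"
    and "(\<integral>\<omega>. (\<Sum>p\<in>P. f (X (fst p) \<omega>) * g (X (snd p) \<omega>))^2 \<partial>M) =
         real (card P) * (\<integral>\<omega>. (f (X 1 \<omega>))^2 \<partial>M) * (\<integral>\<omega>. (g (X 1 \<omega>))^2 \<partial>M)"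
proof -
  note pe = pair_expect[OF assms(1-8)]
  have sq: "(\<Sum>p\<in>P. f (X (fst p) \<omega>) * g (X (snd p) \<omega>))^2 =
     (\<Sum>p\<in>P. \<Sum>q\<in>P. f (X (fst p) \<omega>) * g (X (snd p) \<omega>) * (f (X (fst q) \<omega>) * g (X (snd q) \<omega>)))" for \<omega>
    by (simp add: power2_eq_square sum_product)
  show "integrable M (\<lambda>\<omega>. (\<Sum>p\<in>P. f (X (fst p) \<omega>) * g (X (snd p) \<omega>))^2)"
    unfolding sq
    apply (rule Bochner_Integration.integrable_sum)
    apply (rule Bochner_Integration.integrable_sum)
    apply (rule pe(1))
    using P(2) by auto
  have "(\<integral>\<omega>. (\<Sum>p\<in>P. f (X (fst p) \<omega>) * g (X (snd p) \<omega>))^2 \<partial>M) =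
     (\<Sum>p\<in>P. \<Sum>q\<in>P. (\<integral>\<omega>. f (X (fst p) \<omega>) * g (X (snd p) \<omega>) * (f (X (fst q) \<omega>) * g (X (snd q) \<omega>)) \<partial>M))"
    unfolding sq by (simp add: integral_sum integrable_sum pe(1) P)
  also have "\<dots> = (\<Sum>p\<in>P. \<Sum>q\<in>P. if p = q then (\<integral>\<omega>. (f (X 1 \<omega>))^2 \<partial>M) * (\<integral>\<omega>. (g (X 1 \<omega>))^2 \<partial>M) else 0)"
    by (intro sum.cong refl, subst pe(2)) (auto simp: P prod_eq_iff)
  also have "\<dots> = real (card P) * (\<integral>\<omega>. (f (X 1 \<omega>))^2 \<partial>M) * (\<integral>\<omega>. (g (X 1 \<omega>))^2 \<partial>M)"
    using P(1) by simp
  finally show "(\<integral>\<omega>. (\<Sum>p\<in>P. f (X (fst p) \<omega>) * g (X (snd p) \<omega>))^2 \<partial>M) =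
         real (card P) * (\<integral>\<omega>. (f (X 1 \<omega>))^2 \<partial>M) * (\<integral>\<omega>. (g (X 1 \<omega>))^2 \<partial>M)" .
qed


definition Tr :: "real \<Rightarrow> real \<Rightarrow> real" where
  "Tr K x = (if \<bar>x\<bar> \<le> K then x else 0)"

lemma Tr_meas[measurable]: "Tr K \<in> borel_measurable borel"
  unfolding Tr_def[abs_def] by measurable

lemma Tr_abs: "\<bar>Tr K x\<bar> \<le> \<bar>x\<bar>" and Tr_sq: "(Tr K x)^2 \<le> x^2" and Tr_mult: "x * Tr K x = (Tr K x)^2"
  by (auto simp: Tr_def power2_eq_square)

definition "cK K = (\<integral>\<omega>. Tr K (X 1 \<omega>) \<partial>M)"
definition "m2K K = (\<integral>\<omega>. (Tr K (X 1 \<omega>))^2 \<partial>M)"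
definition "bK K = m2K K - (cK K)^2"
definition "zf K x = (Tr K x - cK K) / sqrt (bK K)"
definition "yf K x = x - zf K x"

lemma zf_meas[measurable]: "zf K \<in> borel_measurable borel"
  unfolding zf_def[abs_def] by measurable
lemma yf_meas[measurable]: "yf K \<in> borel_measurable borel"
  unfolding yf_def[abs_def] by measurable

context
  assumes int1: "integrable M (X 1)" and mean0: "(\<integral>\<omega>. X 1 \<omega> \<partial>M) = 0"
    and int2: "integrable M (\<lambda>\<omega>. (X 1 \<omega>)^2)" and sq1: "(\<integral>\<omega>. (X 1 \<omega>)^2 \<partial>M) = 1"
begin

lemma intT: "integrable M (\<lambda>\<omega>. Tr K (X 1 \<omega>))"
  by (rule Bochner_Integration.integrable_bound[OF int1]) (auto intro!: AE_I2 Tr_abs)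

lemma intT2: "integrable M (\<lambda>\<omega>. (Tr K (X 1 \<omega>))^2)"
  by (rule Bochner_Integration.integrable_bound[OF int2]) (auto intro!: AE_I2 Tr_sq)

lemma trunc_eqs:
  "trunc_mean M X K = cK K" "trunc_var M X K = bK K" "trunc_X M X K u \<omega> = zf K (X u \<omega>)"
proof -
  have e: "X u \<omega> * indicator {\<omega>. \<bar>X u \<omega>\<bar> \<le> K} \<omega> = Tr K (X u \<omega>)" for u \<omega>
    by (simp add: Tr_def indicator_def)
  show 1: "trunc_mean M X K = cK K" unfolding trunc_mean_def e cK_def ..
  show 2: "trunc_var M X K = bK K" unfolding trunc_var_def e bK_def m2K_def cK_def
    using variance_eq[OF intT intT2] by simp
  show "trunc_X M X K u \<omega> = zf K (X u \<omega>)" unfolding trunc_X_def e 1 2 zf_def ..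
qed

lemma lim_c: "(cK \<longlongrightarrow> 0) at_top"
proof -
  have "((\<lambda>K. \<integral>\<omega>. Tr K (X 1 \<omega>) \<partial>M) \<longlongrightarrow> (\<integral>\<omega>. X 1 \<omega> \<partial>M)) at_top"
  proof (rule integral_dominated_convergence_at_top[where w="\<lambda>\<omega>. \<bar>X 1 \<omega>\<bar>"])
    show "AE x in M. ((\<lambda>i. Tr i (X 1 x)) \<longlongrightarrow> X 1 x) at_top"
    proof (rule AE_I2)
      fix x
      have "\<forall>\<^sub>F i in at_top. Tr i (X 1 x) = X 1 x"
        using eventually_ge_at_top[of "\<bar>X 1 x\<bar>"] by eventually_elim (simp add: Tr_def)
      then show "((\<lambda>i. Tr i (X 1 x)) \<longlongrightarrow> X 1 x) at_top" by (rule tendsto_eventually)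
    qed
  qed (use integrable_abs[OF int1] in \<open>auto intro!: always_eventually AE_I2 Tr_abs\<close>)
  then show ?thesis using mean0 by (simp add: cK_def[abs_def])
qed

lemma lim_m2: "(m2K \<longlongrightarrow> 1) at_top"
proof -
  have "((\<lambda>K. \<integral>\<omega>. (Tr K (X 1 \<omega>))^2 \<partial>M) \<longlongrightarrow> (\<integral>\<omega>. (X 1 \<omega>)^2 \<partial>M)) at_top"
  proof (rule integral_dominated_convergence_at_top[where w="\<lambda>\<omega>. (X 1 \<omega>)^2"])
    show "AE x in M. ((\<lambda>i. (Tr i (X 1 x))^2) \<longlongrightarrow> (X 1 x)^2) at_top"
    proof (rule AE_I2)
      fix x
      have "\<forall>\<^sub>F i in at_top. (Tr i (X 1 x))^2 = (X 1 x)^2"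
        using eventually_ge_at_top[of "\<bar>X 1 x\<bar>"] by eventually_elim (simp add: Tr_def)
      then show "((\<lambda>i. (Tr i (X 1 x))^2) \<longlongrightarrow> (X 1 x)^2) at_top" by (rule tendsto_eventually)
    qed
  qed (use int2 in \<open>auto intro!: always_eventually AE_I2 Tr_sq\<close>)
  then show ?thesis using sq1 by (simp add: m2K_def[abs_def])
qed

lemma lim_b: "(bK \<longlongrightarrow> 1) at_top"
proof -
  have "((\<lambda>K. m2K K - (cK K)^2) \<longlongrightarrow> 1 - 0^2) at_top"
    by (intro tendsto_intros lim_m2 lim_c)
  then show ?thesis by (simp add: bK_def[abs_def])
qed

lemma ev_b: "\<forall>\<^sub>F K in at_top. bK K > 0"
  using lim_b by (rule order_tendstoD) simp

lemma lim_e: "((\<lambda>K. 2 - 2 * m2K K / sqrt (bK K)) \<longlongrightarrow> 0) at_top"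
proof -
  have "((\<lambda>K. 2 - 2 * m2K K / sqrt (bK K)) \<longlongrightarrow> 2 - 2 * 1 / sqrt 1) at_top"
    by (intro tendsto_intros lim_m2 lim_b) simp
  then show ?thesis by simp
qed

context
  fixes K assumes bpos: "bK K > 0"
begin

lemma z_facts:
  "integrable M (\<lambda>\<omega>. zf K (X 1 \<omega>))" "integrable M (\<lambda>\<omega>. (zf K (X 1 \<omega>))^2)"
  "(\<integral>\<omega>. zf K (X 1 \<omega>) \<partial>M) = 0" "(\<integral>\<omega>. (zf K (X 1 \<omega>))^2 \<partial>M) = 1"
proof -
  define s where "s = sqrt (bK K)"
  have s2: "s^2 = bK K" using bpos by (simp add: s_def)
  have spos: "s > 0" using bpos by (simp add: s_def)
  have ez: "zf K x = Tr K x / s - cK K / s" for x by (simp add: zf_def s_def diff_divide_distrib)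
  have ez2: "(zf K x)^2 = (Tr K x)^2 / s^2 - 2 * cK K / s^2 * Tr K x + (cK K)^2 / s^2" for x
    unfolding ez using spos by (simp add: power2_eq_square field_simps)
  note i = intT[of K] intT2[of K]
  show "integrable M (\<lambda>\<omega>. zf K (X 1 \<omega>))" unfolding ez using i by auto
  show "integrable M (\<lambda>\<omega>. (zf K (X 1 \<omega>))^2)" unfolding ez2 using i by auto
  show "(\<integral>\<omega>. zf K (X 1 \<omega>) \<partial>M) = 0" unfolding ez using i
    by (simp add: cK_def prob_space)
  have "(\<integral>\<omega>. (zf K (X 1 \<omega>))^2 \<partial>M) = m2K K / s^2 - 2 * cK K / s^2 * cK K + (cK K)^2 / s^2"
    unfolding ez2 using i by (simp add: cK_def m2K_def prob_space)
  also have "\<dots> = (m2K K - (cK K)^2) / s^2" by (simp add: diff_divide_distrib add_divide_distrib power2_eq_square)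
  also have "\<dots> = 1" unfolding s2 using bpos by (simp add: bK_def)
  finally show "(\<integral>\<omega>. (zf K (X 1 \<omega>))^2 \<partial>M) = 1" .
qed

lemma y_facts:
  "integrable M (\<lambda>\<omega>. yf K (X 1 \<omega>))" "integrable M (\<lambda>\<omega>. (yf K (X 1 \<omega>))^2)"
  "(\<integral>\<omega>. yf K (X 1 \<omega>) \<partial>M) = 0" "(\<integral>\<omega>. (yf K (X 1 \<omega>))^2 \<partial>M) = 2 - 2 * m2K K / sqrt (bK K)"
proof -
  define s where "s = sqrt (bK K)"
  have spos: "s > 0" using bpos by (simp add: s_def)
  have ey2: "(yf K x)^2 = x^2 - 2 / s * (Tr K x)^2 + 2 * cK K / s * x + (zf K x)^2" for x
  proof -
    have "(yf K x)^2 = x^2 - 2 * (x * zf K x) + (zf K x)^2" by (simp add: yf_def power2_eq_square algebra_simps)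
    also have "x * zf K x = (x * Tr K x - cK K * x) / s" by (simp add: zf_def s_def algebra_simps)
    finally show ?thesis unfolding Tr_mult using spos by (simp add: field_simps)
  qed
  note i = intT[of K] intT2[of K] z_facts int1 int2
  show "integrable M (\<lambda>\<omega>. yf K (X 1 \<omega>))" unfolding yf_def using i by auto
  show "integrable M (\<lambda>\<omega>. (yf K (X 1 \<omega>))^2)" unfolding ey2 using i by auto
  show "(\<integral>\<omega>. yf K (X 1 \<omega>) \<partial>M) = 0" unfolding yf_def using i mean0 by simp
  have "(\<integral>\<omega>. (yf K (X 1 \<omega>))^2 \<partial>M) = 1 - 2 / s * m2K K + 2 * cK K / s * 0 + 1"
    unfolding ey2 using i sq1 mean0 by (simp add: m2K_def prob_space)
  then show "(\<integral>\<omega>. (yf K (X 1 \<omega>))^2 \<partial>M) = 2 - 2 * m2K K / sqrt (bK K)" by (simp add: s_def)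
qed

end

lemma prob_bound:
  fixes n :: nat and A :: "nat \<Rightarrow> nat \<Rightarrow> bool" and \<epsilon> :: real
  assumes eps: "\<epsilon> > 0" and bpos: "bK K > 0"
  shows "measure M {\<omega> \<in> space M. \<bar>S_graph n A (\<lambda>u. X u \<omega>) - S_graph n A (\<lambda>u. zf K (X u \<omega>))\<bar> > \<epsilon>}
     \<le> 4 * (2 - 2 * m2K K / sqrt (bK K)) / \<epsilon>^2"
proof -
  define e where "e = 2 - 2 * m2K K / sqrt (bK K)"
  define P where "P = {(u, v). 1 \<le> u \<and> u < v \<and> v \<le> n \<and> A u v}"
  define N where "N = real (card P)"
  have finP: "finite P" unfolding P_def by (rule edge_set_finite)
  have Pl: "\<And>p. p \<in> P \<Longrightarrow> fst p < snd p" by (auto simp: P_def)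
  have NE: "num_edges n A = card P" by (simp add: num_edges_def P_def)
  define F where "F \<omega> = (\<Sum>p\<in>P. yf K (X (fst p) \<omega>) * X (snd p) \<omega>)" for \<omega>
  define G where "G \<omega> = (\<Sum>p\<in>P. zf K (X (fst p) \<omega>) * yf K (X (snd p) \<omega>))" for \<omega>
  note yF = y_facts[OF bpos] and zF = z_facts[OF bpos]
  have sF: "integrable M (\<lambda>\<omega>. (F \<omega>)^2) \<and> (\<integral>\<omega>. (F \<omega>)^2 \<partial>M) = N * e"
  proof -
    note ss = sum_sq[of "yf K" "\<lambda>x. x", OF yf_meas measurable_ident_sets[OF refl] yF(2) int2 yF(1) int1 yF(3) mean0 finP Pl]
    show ?thesis unfolding F_def N_def using ss unfolding sq1 yF(4) e_def by simp
  qed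
  have sG: "integrable M (\<lambda>\<omega>. (G \<omega>)^2) \<and> (\<integral>\<omega>. (G \<omega>)^2 \<partial>M) = N * e"
  proof -
    note ss = sum_sq[of "zf K" "yf K", OF zf_meas yf_meas zF(2) yF(2) zF(1) yF(1) zF(3) yF(3) finP Pl]
    show ?thesis unfolding G_def N_def using ss unfolding zF(4) yF(4) e_def by simp
  qed
  have e0: "e \<ge> 0" unfolding e_def yF(4)[symmetric] by (rule integral_nonneg_AE) simp
  define D where "D \<omega> = S_graph n A (\<lambda>u. X u \<omega>) - S_graph n A (\<lambda>u. zf K (X u \<omega>))" for \<omega>
  have Deq: "D \<omega> = (1 / sqrt N) * (F \<omega> + G \<omega>)" for \<omega>
  proof -
    have S1: "S_graph n A x = (1/sqrt N) * (\<Sum>p\<in>P. x (fst p) * x (snd p))" for x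
      unfolding S_graph_def graph_sum NE N_def P_def by simp
    have "D \<omega> = (1 / sqrt N) * (\<Sum>p\<in>P. X (fst p) \<omega> * X (snd p) \<omega> - zf K (X (fst p) \<omega>) * zf K (X (snd p) \<omega>))"
      unfolding D_def S1 sum_subtractf right_diff_distrib ..
    also have "\<dots> = (1 / sqrt N) * (F \<omega> + G \<omega>)"
      unfolding F_def G_def sum.distrib[symmetric] by (intro arg_cong[where f="\<lambda>x. _ * x"] sum.cong refl) (simp add: yf_def algebra_simps)
    finally show ?thesis .
  qed
  define U where "U \<omega> = 2 / N * ((F \<omega>)^2 + (G \<omega>)^2)" for \<omega>
  have intU: "integrable M U" unfolding U_def[abs_def] using sF sG by (intro integrable_mult_right Bochner_Integration.integrable_add) auto
  have intU_val: "(\<integral>\<omega>. U \<omega> \<partial>M) \<le> 4 * e"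
  proof -
    have "(\<integral>\<omega>. U \<omega> \<partial>M) = 2 / N * (N * e + N * e)" unfolding U_def using sF sG by simp
    also have "\<dots> \<le> 4 * e" using e0 by (cases "N = 0") (auto simp: field_simps)
    finally show ?thesis .
  qed
  have DU: "(D \<omega>)^2 \<le> U \<omega>" for \<omega>
  proof -
    have N0: "N \<ge> 0" by (simp add: N_def)
    have "(D \<omega>)^2 = 1 / N * (F \<omega> + G \<omega>)^2" unfolding Deq using N0 by (simp add: power_mult_distrib power_divide)
    also have "\<dots> \<le> 1 / N * (2 * ((F \<omega>)^2 + (G \<omega>)^2))"
    proof (rule mult_left_mono)
      have "0 \<le> (F \<omega> - G \<omega>)^2" by simp
      then show "(F \<omega> + G \<omega>)^2 \<le> 2 * ((F \<omega>)^2 + (G \<omega>)^2)" by (simp add: power2_eq_square algebra_simps)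
    qed (use N0 in simp)
    also have "\<dots> = U \<omega>" by (simp add: U_def)
    finally show ?thesis .
  qed
  have "measure M {\<omega> \<in> space M. \<bar>D \<omega>\<bar> > \<epsilon>} \<le> measure M {\<omega> \<in> space M. \<epsilon>^2 \<le> U \<omega>}"
  proof (rule finite_measure_mono)
    show "{\<omega> \<in> space M. \<bar>D \<omega>\<bar> > \<epsilon>} \<subseteq> {\<omega> \<in> space M. \<epsilon>^2 \<le> U \<omega>}"
    proof safe
      fix \<omega> assume "\<bar>D \<omega>\<bar> > \<epsilon>"
      then have "\<epsilon>^2 \<le> \<bar>D \<omega>\<bar>^2" using eps by (intro power_mono) auto
      then show "\<epsilon>^2 \<le> U \<omega>" using DU[of \<omega>] by simp
    qed
    have [measurable]: "U \<in> borel_measurable M" using intU by (rule borel_measurable_integrable)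
    show "{\<omega> \<in> space M. \<epsilon>^2 \<le> U \<omega>} \<in> sets M" by measurable
  qed
  also have "\<dots> \<le> (\<integral>\<omega>. U \<omega> \<partial>M) / \<epsilon>^2"
    by (rule integral_Markov_inequality_measure[OF intU, of "space M"]) (use eps in \<open>auto simp: U_def N_def intro!: AE_I2\<close>)
  also have "\<dots> \<le> 4 * e / \<epsilon>^2" using intU_val eps by (simp add: divide_right_mono)
  finally show ?thesis unfolding D_def e_def .
qed

end
end


theorem lemma3p1:
  fixes M :: "'a measure" and X :: "nat \<Rightarrow> 'a \<Rightarrow> real"
    and G :: "nat \<Rightarrow> nat \<Rightarrow> nat \<Rightarrow> bool" and \<epsilon> :: real
  assumes "prob_space M"
    and meas: "\<And>i. X i \<in> borel_measurable M"
    and indep: "prob_space.indep_vars M (\<lambda>_. borel) X UNIV"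
    and ident: "\<And>i. distr M borel (X i) = distr M borel (X 1)"
    and int1: "integrable M (X 1)"
    and mean0: "prob_space.expectation M (X 1) = 0"
    and int2: "integrable M (\<lambda>\<omega>. (X 1 \<omega>)\<^sup>2)"
    and var1: "prob_space.variance M (X 1) = 1"
    and graphs: "\<And>n. graph_class n (G n)"
    and edges: "filterlim (\<lambda>n. num_edges n (G n)) at_top sequentially"
    and eps: "\<epsilon> > 0"
  shows "((\<lambda>K. SUP n\<in>{1..}. measure M {\<omega> \<in> space M.
            \<bar>S_graph n (G n) (\<lambda>u. X u \<omega>) - S_graph n (G n) (\<lambda>u. trunc_X M X K u \<omega>)\<bar> > \<epsilon>})
          \<longlongrightarrow> 0) at_top"
proof -
  interpret prob_space M by fact
  interpret I: iidX M X by unfold_locales (use meas indep ident in auto)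
  have mean0': "(\<integral>\<omega>. X 1 \<omega> \<partial>M) = 0" using mean0 by simp
  have sq1: "(\<integral>\<omega>. (X 1 \<omega>)^2 \<partial>M) = 1" using var1 mean0 by simp
  note F = int1 mean0' int2 sq1
  define m where "m K n = measure M {\<omega> \<in> space M.
            \<bar>S_graph n (G n) (\<lambda>u. X u \<omega>) - S_graph n (G n) (\<lambda>u. trunc_X M X K u \<omega>)\<bar> > \<epsilon>}" for K n
  define h where "h K = 4 * (2 - 2 * I.m2K K / sqrt (I.bK K)) / \<epsilon>^2" for K
  have bdd: "bdd_above (m K ` {1..})" for K
    by (rule bdd_aboveI2[where M=1]) (simp add: m_def)
  have lo: "\<forall>\<^sub>F K in at_top. 0 \<le> (SUP n\<in>{1..}. m K n)"
    by (intro always_eventually allI cSUP_upper2[OF bdd, of 1]) (auto simp: m_def)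
  have up: "\<forall>\<^sub>F K in at_top. (SUP n\<in>{1..}. m K n) \<le> h K"
    using I.ev_b[OF F]
  proof eventually_elim
    case (elim K)
    show ?case
    proof (rule cSUP_least)
      fix n :: nat
      have "m K n = measure M {\<omega> \<in> space M.
            \<bar>S_graph n (G n) (\<lambda>u. X u \<omega>) - S_graph n (G n) (\<lambda>u. I.zf K (X u \<omega>))\<bar> > \<epsilon>}"
        unfolding m_def I.trunc_eqs[OF F] ..
      also have "\<dots> \<le> h K" unfolding h_def by (rule I.prob_bound[OF F eps elim])
      finally show "m K n \<le> h K" .
    qed simp
  qed
  have "(h \<longlongrightarrow> 4 * 0 / \<epsilon>^2) at_top"
    unfolding h_def by (intro tendsto_intros I.lim_e[OF F]) (use eps in simp)
  then have lim: "(h \<longlongrightarrow> 0) at_top" by simp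
  show ?thesis
    using tendsto_sandwich[OF lo up tendsto_const lim] unfolding m_def .
qed

end
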